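(* Let $k \geq 1$ be an integer. There exist complex matrices $W_{(v)}, W_{(w)}$ of size $(4k+1) \times (2k+2)$, with columns indexed by $0,\ldots,2k+1$, such that, writing $W := [W_{(v)}, W_{(w)}]$ for the $(4k+1)\times(4k+4)$ block matrix and $c^{(v)}_i, c^{(w)}_i$ for the $i$-th columns of $W_{(v)}, W_{(w)}$: (i) $c^{(v)}_i \perp c^{(v)}_j$ whenever $j - i \not\equiv 0, 1, 2k+1 \pmod{2k+2}$; (ii) $c^{(w)}_i \perp c^{(w)}_j$ whenever $j - i \not\equiv 0, 1, 2k+1 \pmod{2k+2}$; (iii) $c^{(v)}_i \perp c^{(w)}_j$ whenever $i \neq j$; (iv) every $(4k+1)\times(4k+1)$ submatrix of $W$ (formed by any $4k+1$ columns) is nonsingular.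
   Context: Orthogonality is with respect to the standard inner product on $\mathbb{C}^{4k+1}$. *)

theory Defs
  imports "Jordan_Normal_Form.Determinant" "Jordan_Normal_Form.DL_Submatrix"
begin

definition orth :: "complex vec \<Rightarrow> complex vec \<Rightarrow> bool" where
  "orth v w \<longleftrightarrow> v \<bullet>c w = 0"

definition block_cols :: "'a mat \<Rightarrow> 'a mat \<Rightarrow> 'a mat" where
  "block_cols A B = mat (dim_row A) (dim_col A + dim_col B)
     (\<lambda>(i,j). if j < dim_col A then A $$ (i,j) else B $$ (i, j - dim_col A))"

end

theory Submission
  imports Defs
begin


definition E :: "nat \<Rightarrow> real \<Rightarrow> complex" where
  "E m x = cis (2 * pi * x / real m)"

lemma E_mult: "E m x * E m y = E m (x + y)"
  unfolding E_def cis_mult by (simp add: add_divide_distrib algebra_simps)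

lemma E_cnj: "cnj (E m x) = E m (- x)"
  unfolding E_def cis_cnj by simp

lemma E_zero[simp]: "E m 0 = 1" unfolding E_def by simp

lemma E_nonzero[simp]: "E m x \<noteq> 0" unfolding E_def by simp

lemma norm_E[simp]: "cmod (E m x) = 1" unfolding E_def by simp

lemma E_int_eq_1_iff:
  assumes "m > 0"
  shows "E m (of_int d) = 1 \<longleftrightarrow> int m dvd d"
proof
  assume h: "E m (of_int d) = 1"
  then have "cos (2 * pi * of_int d / real m) = 1"
    unfolding E_def by (simp add: complex_eq_iff)
  then obtain k :: int where k: "2 * pi * of_int d / real m = of_int k * 2 * pi"
    by (auto simp: cos_one_2pi_int)
  then have "real_of_int d = real m * of_int k" using assms
    by (simp add: field_simps)
  then have "d = int m * k"
    by (metis of_int_eq_iff of_int_mult of_int_of_nat_eq)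
  then show "int m dvd d" by simp
next
  assume "int m dvd d"
  then obtain k where "d = int m * k" by auto
  then have "2 * pi * of_int d / real m = 2 * pi * of_int k" using assms by simp
  then show "E m (of_int d) = 1" unfolding E_def by simp
qed

lemma E_pow: "E m x ^ n = E m (real n * x)"
  unfolding E_def DeMoivre by (simp add: algebra_simps)

lemma geo_sum:
  assumes "m > 0"
  shows "(\<Sum>r<m. E m (real r * of_int d)) = (if int m dvd d then of_nat m else 0)"
proof (cases "int m dvd d")
  case True
  have "E m (real r * of_int d) = 1" for r
  proof -
    have "real r * of_int d = of_int (int r * d)" by simp
    moreover have "int m dvd int r * d" using True by simp
    ultimately show ?thesis using E_int_eq_1_iff[OF assms] by metis
  qed
  then show ?thesis using True by simp
next
  case False
  define z where "z = E m (of_int d)"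
  have z1: "z \<noteq> 1" using False E_int_eq_1_iff[OF assms] z_def by auto
  have "E m (real r * of_int d) = z ^ r" for r unfolding z_def E_pow by simp
  then have "(\<Sum>r<m. E m (real r * of_int d)) = (\<Sum>r<m. z ^ r)" by simp
  also have "\<dots> = (z ^ m - 1) / (z - 1)" using z1 by (subst geometric_sum) auto
  also have "z ^ m = 1" unfolding z_def E_pow
    using E_int_eq_1_iff[OF assms, of "int m * d"] by simp
  finally show ?thesis using False by simp
qed




definition CC :: "nat \<Rightarrow> real" where "CC m = (1 + cos (2 * pi / real m)) / 2"
definition SS :: "nat \<Rightarrow> real" where "SS m = sqrt (1 - (CC m)\<^sup>2)"
definition eta :: "nat \<Rightarrow> complex" where "eta m = Complex (CC m) (SS m)"
definition ee :: "nat \<Rightarrow> nat \<Rightarrow> complex" where "ee m s = E m (real s) - eta m"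
definition PP :: "nat \<Rightarrow> nat \<Rightarrow> real" where "PP m s = (cmod (ee m s))\<^sup>2"
definition QQ :: "nat \<Rightarrow> nat \<Rightarrow> real" where "QQ m s = (cmod (E m (real s) - cnj (eta m)))\<^sup>2"
definition gg :: "nat \<Rightarrow> real" where "gg m = PP m 0"

lemma basic_trig:
  assumes "m \<ge> 4"
  shows "0 \<le> cos (2 * pi / real m)" "cos (2 * pi / real m) < 1" "0 < sin (2 * pi / real m)"
proof -
  have h0: "0 < 2 * pi / real m" using assms by simp
  have h1: "2 * pi / real m \<le> pi / 2" using assms pi_gt_zero
    by (simp add: field_simps)
  show "0 \<le> cos (2 * pi / real m)" using h0 h1 by (intro cos_ge_zero) auto
  show "cos (2 * pi / real m) < 1" using cos_monotone_0_pi[of 0 "2 * pi / real m"] h0 h1 by simp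
  show "0 < sin (2 * pi / real m)" using h0 h1 by (intro sin_gt_zero) auto
qed

lemma CS_facts:
  assumes "m \<ge> 4"
  shows "0 < CC m" "CC m < 1" "0 < SS m" "(CC m)\<^sup>2 + (SS m)\<^sup>2 = 1"
proof -
  note bt = basic_trig[OF assms]
  show c0: "0 < CC m" using bt unfolding CC_def by simp
  show c1: "CC m < 1" using bt unfolding CC_def by simp
  have "(CC m)\<^sup>2 < 1" using c0 c1 by (simp add: abs_square_less_1)
  then show "0 < SS m" unfolding SS_def by simp
  show "(CC m)\<^sup>2 + (SS m)\<^sup>2 = 1" using \<open>(CC m)\<^sup>2 < 1\<close> unfolding SS_def by simp
qed

lemma Re_E: "Re (E m x) = cos (2 * pi * x / real m)" unfolding E_def by simp
lemma Im_E: "Im (E m x) = sin (2 * pi * x / real m)" unfolding E_def by simp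

lemma PP_formula:
  assumes "m \<ge> 4"
  shows "PP m s = 2 - 2 * CC m * Re (E m (real s)) - 2 * SS m * Im (E m (real s))"
proof -
  let ?u = "E m (real s)"
  have u: "(Re ?u)\<^sup>2 + (Im ?u)\<^sup>2 = 1" using norm_E[of m "real s"] by (simp add: cmod_def)
  have "PP m s = (Re ?u - CC m)\<^sup>2 + (Im ?u - SS m)\<^sup>2"
    unfolding PP_def ee_def eta_def cmod_power2 by simp
  moreover have i2: "(Im ?u)\<^sup>2 = 1 - (Re ?u)\<^sup>2" using u by simp
  moreover have cs: "(SS m)\<^sup>2 = 1 - (CC m)\<^sup>2" using CS_facts(4)[OF assms] by simp
  ultimately show ?thesis by (simp add: power2_diff power2_sum algebra_simps)
qed

lemma QQ_formula:
  assumes "m \<ge> 4"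
  shows "QQ m s = 2 - 2 * CC m * Re (E m (real s)) + 2 * SS m * Im (E m (real s))"
proof -
  let ?u = "E m (real s)"
  have u: "(Re ?u)\<^sup>2 + (Im ?u)\<^sup>2 = 1" using norm_E[of m "real s"] by (simp add: cmod_def)
  have "QQ m s = (Re ?u - CC m)\<^sup>2 + (Im ?u + SS m)\<^sup>2"
    unfolding QQ_def eta_def cmod_power2 by simp
  moreover have i2: "(Im ?u)\<^sup>2 = 1 - (Re ?u)\<^sup>2" using u by simp
  moreover have cs: "(SS m)\<^sup>2 = 1 - (CC m)\<^sup>2" using CS_facts(4)[OF assms] by simp
  ultimately show ?thesis by (simp add: power2_diff power2_sum algebra_simps)
qed

lemma PQ_prod:
  assumes "m \<ge> 4"
  shows "PP m s * QQ m s = (2 * Re (E m (real s)) - 1 - cos (2 * pi / real m))\<^sup>2"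
proof -
  let ?u = "E m (real s)"
  have u: "(Re ?u)\<^sup>2 + (Im ?u)\<^sup>2 = 1" using norm_E[of m "real s"] by (simp add: cmod_def)
  have cs: "(SS m)\<^sup>2 = 1 - (CC m)\<^sup>2" using CS_facts(4)[OF assms] by simp
  have "PP m s * QQ m s = (2 - 2 * CC m * Re ?u)\<^sup>2 - 4 * (SS m)\<^sup>2 * (Im ?u)\<^sup>2"
    unfolding PP_formula[OF assms] QQ_formula[OF assms] by (simp add: power2_eq_square algebra_simps)
  also have "\<dots> = 4 * (Re ?u - CC m)\<^sup>2"
  proof -
    have i2: "(Im ?u)\<^sup>2 = 1 - (Re ?u)\<^sup>2" using u by simp
    show ?thesis by (simp only: cs i2) (simp add: power2_eq_square algebra_simps)
  qed
  finally show ?thesis unfolding CC_def by (simp add: power2_eq_square algebra_simps)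
qed

lemma gg_val:
  assumes "m \<ge> 4"
  shows "gg m = 1 - cos (2 * pi / real m)"
  unfolding gg_def PP_formula[OF assms] by (simp add: Re_E Im_E CC_def field_simps)

lemma cos_s_less:
  assumes "m \<ge> 4" "2 \<le> s" "s \<le> m - 2"
  shows "cos (2 * pi * real s / real m) < cos (2 * pi / real m)"
proof (cases "2 * s \<le> m")
  case True
  have a: "2 * pi / real m < 2 * pi * real s / real m" using assms by (simp add: divide_strict_right_mono)
  have b: "2 * pi * real s / real m \<le> pi"
  proof -
    have "2 * real s \<le> real m" using True by linarith
    then show ?thesis using assms by (simp add: field_simps)
  qed
  show ?thesis using cos_monotone_0_pi[OF _ a b] assms by simp
next
  case False
  have eq: "cos (2 * pi * real s / real m) = cos (2 * pi * real (m - s) / real m)"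
  proof -
    have "2 * pi * real (m - s) / real m = 2 * pi - 2 * pi * real s / real m"
      using assms by (simp add: field_simps of_nat_diff)
    then show ?thesis by simp
  qed
  have a: "2 * pi / real m < 2 * pi * real (m - s) / real m" using assms
    by (simp add: divide_strict_right_mono)
  have b: "2 * pi * real (m - s) / real m \<le> pi"
  proof -
    have "2 * real (m - s) \<le> real m" using False assms by (simp add: of_nat_diff)
    then show ?thesis using assms by (simp add: field_simps)
  qed
  show ?thesis unfolding eq using cos_monotone_0_pi[OF _ a b] assms by simp
qed

lemma cos_last:
  assumes "m \<ge> 4"
  shows "cos (2 * pi * real (m - 1) / real m) = cos (2 * pi / real m)"
        "sin (2 * pi * real (m - 1) / real m) = - sin (2 * pi / real m)"
proof -
  have "2 * pi * real (m - 1) / real m = 2 * pi - 2 * pi / real m"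
    using assms by (simp add: field_simps of_nat_diff)
  then show "cos (2 * pi * real (m - 1) / real m) = cos (2 * pi / real m)"
        "sin (2 * pi * real (m - 1) / real m) = - sin (2 * pi / real m)" by simp_all
qed




definition tau :: "nat \<Rightarrow> nat \<Rightarrow> real" where
  "tau m s = sqrt (QQ m s - (gg m)\<^sup>2 / PP m s)"

lemma gg_pos: assumes "m \<ge> 4" shows "0 < gg m"
  using gg_val[OF assms] basic_trig[OF assms] by simp

lemma PQ_cases:
  assumes "m \<ge> 4" "s < m"
  shows "(gg m)\<^sup>2 \<le> PP m s * QQ m s"
    and "s = 0 \<or> s = 1 \<or> s = m - 1 \<Longrightarrow> PP m s * QQ m s = (gg m)\<^sup>2"
    and "2 \<le> s \<Longrightarrow> s \<le> m - 2 \<Longrightarrow> (gg m)\<^sup>2 < PP m s * QQ m s"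
proof -
  define c where "c = cos (2 * pi / real m)"
  have c1: "c < 1" "0 \<le> c" using basic_trig[OF assms(1)] c_def by auto
  have g: "gg m = 1 - c" using gg_val[OF assms(1)] c_def by simp
  define x where "x = Re (E m (real s))"
  have pq: "PP m s * QQ m s = (2 * x - 1 - c)\<^sup>2" using PQ_prod[OF assms(1)] x_def c_def by simp
  have x_le: "x \<le> c" if "s \<noteq> 0"
  proof -
    have "s = 1 \<or> s = m - 1 \<or> (2 \<le> s \<and> s \<le> m - 2)" using that assms by linarith
    then consider "s = 1" | "s = m - 1" | "2 \<le> s \<and> s \<le> m - 2" by blast
    then show ?thesis
    proof cases
      case 1 then show ?thesis using x_def c_def Re_E by simp
    next
      case 2 then show ?thesis using x_def c_def Re_E cos_last[OF assms(1)] by simp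
    next
      case 3 then show ?thesis using x_def c_def Re_E cos_s_less[OF assms(1)] by force
    qed
  qed
  have strict: "(gg m)\<^sup>2 < PP m s * QQ m s" if "2 \<le> s" "s \<le> m - 2"
  proof -
    have "x < c" using x_def c_def Re_E cos_s_less[OF assms(1) that] by simp
    then have "1 - c < 1 + c - 2 * x" by simp
    then have "(1 - c)\<^sup>2 < (1 + c - 2 * x)\<^sup>2" using c1 by (intro power_strict_mono) auto
    then show ?thesis unfolding pq g by (simp add: power2_eq_square algebra_simps)
  qed
  show "(gg m)\<^sup>2 \<le> PP m s * QQ m s"
  proof (cases "s = 0")
    case True
    then have "x = 1" using x_def Re_E by simp
    then show ?thesis unfolding pq g by (simp add: power2_eq_square algebra_simps)
  next
    case False
    then have "x \<le> c" by (rule x_le)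
    then have "1 - c \<le> 1 + c - 2 * x" by simp
    then have "(1 - c)\<^sup>2 \<le> (1 + c - 2 * x)\<^sup>2" using c1 by (intro power_mono) auto
    then show ?thesis unfolding pq g by (simp add: power2_eq_square algebra_simps)
  qed
  show "s = 0 \<or> s = 1 \<or> s = m - 1 \<Longrightarrow> PP m s * QQ m s = (gg m)\<^sup>2"
  proof -
    assume "s = 0 \<or> s = 1 \<or> s = m - 1"
    then have "x = 1 \<or> x = c" using x_def c_def Re_E cos_last[OF assms(1)] by auto
    then show ?thesis unfolding pq g by (auto simp add: power2_eq_square algebra_simps)
  qed
  show "2 \<le> s \<Longrightarrow> s \<le> m - 2 \<Longrightarrow> (gg m)\<^sup>2 < PP m s * QQ m s" by (rule strict)
qed

lemma PP_pos:
  assumes "m \<ge> 4" "s < m"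
  shows "0 < PP m s"
proof -
  have "0 \<le> PP m s" unfolding PP_def by simp
  moreover have "PP m s \<noteq> 0"
  proof
    assume "PP m s = 0"
    then have "(gg m)\<^sup>2 \<le> 0" using PQ_cases(1)[OF assms] by simp
    moreover have "0 < (gg m)\<^sup>2" using gg_pos[OF assms(1)] by simp
    ultimately show False by linarith
  qed
  ultimately show ?thesis by simp
qed

lemma ee_nonzero:
  assumes "m \<ge> 4" "s < m"
  shows "ee m s \<noteq> 0"
  using PP_pos[OF assms] unfolding PP_def by auto

lemma PP_last_QQ1:
  assumes "m \<ge> 4"
  shows "PP m (m - 1) = QQ m 1"
  unfolding PP_formula[OF assms] QQ_formula[OF assms] Re_E Im_E cos_last[OF assms] by simp

lemma PP_1_last:
  assumes "m \<ge> 4"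
  shows "PP m 1 * PP m (m - 1) = (gg m)\<^sup>2"
  unfolding PP_last_QQ1[OF assms] using PQ_cases(2)[OF assms, of 1] assms by simp

lemma PP_1_neq:
  assumes "m \<ge> 4"
  shows "PP m 1 \<noteq> PP m (m - 1)"
proof -
  have "PP m (m - 1) - PP m 1 = 4 * SS m * sin (2 * pi / real m)"
    unfolding PP_formula[OF assms] Re_E Im_E cos_last[OF assms] by simp
  moreover have "0 < 4 * SS m * sin (2 * pi / real m)"
    using CS_facts(3)[OF assms] basic_trig(3)[OF assms] by simp
  ultimately show ?thesis by simp
qed

lemma PP_0: "PP m 0 = gg m" unfolding gg_def by simp

lemma eta_norm: assumes "m \<ge> 4" shows "eta m * cnj (eta m) = 1"
proof -
  have "eta m * cnj (eta m) = of_real ((cmod (eta m))\<^sup>2)" by (rule complex_norm_square[symmetric])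
  also have "(cmod (eta m))\<^sup>2 = 1" unfolding eta_def cmod_power2 using CS_facts(4)[OF assms] by simp
  finally show ?thesis by simp
qed

lemma E_norm: "E m x * cnj (E m x) = 1"
proof -
  have "E m x * cnj (E m x) = of_real ((cmod (E m x))\<^sup>2)" by (rule complex_norm_square[symmetric])
  then show ?thesis by simp
qed

lemma PP_complex:
  assumes "m \<ge> 4"
  shows "complex_of_real (PP m s) = 2 - cnj (eta m) * E m (real s) - eta m * E m (- real s)"
proof -
  have "complex_of_real (PP m s) = ee m s * cnj (ee m s)" unfolding PP_def by (rule complex_norm_square)
  also have "\<dots> = E m (real s) * cnj (E m (real s)) + eta m * cnj (eta m)
      - cnj (eta m) * E m (real s) - eta m * cnj (E m (real s))"
    unfolding ee_def by (simp add: algebra_simps)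
  finally show ?thesis using eta_norm[OF assms] E_norm by (simp add: E_cnj)
qed

lemma QQ_complex:
  assumes "m \<ge> 4"
  shows "complex_of_real (QQ m s) = 2 - eta m * E m (real s) - cnj (eta m) * E m (- real s)"
proof -
  have "complex_of_real (QQ m s) = (E m (real s) - cnj (eta m)) * cnj (E m (real s) - cnj (eta m))"
    unfolding QQ_def by (rule complex_norm_square)
  also have "\<dots> = E m (real s) * cnj (E m (real s)) + eta m * cnj (eta m)
      - eta m * E m (real s) - cnj (eta m) * cnj (E m (real s))"
    by (simp add: algebra_simps)
  finally show ?thesis using eta_norm[OF assms] E_norm by (simp add: E_cnj)
qed

lemma tau_sq:
  assumes "m \<ge> 4" "s < m"
  shows "(tau m s)\<^sup>2 = QQ m s - (gg m)\<^sup>2 / PP m s"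
proof -
  have p: "0 < PP m s" by (rule PP_pos[OF assms])
  have "(gg m)\<^sup>2 / PP m s \<le> QQ m s"
    using PQ_cases(1)[OF assms] p by (simp add: divide_le_eq mult.commute)
  then show ?thesis unfolding tau_def by simp
qed

lemma tau_zero:
  assumes "m \<ge> 4" "s < m" "s = 0 \<or> s = 1 \<or> s = m - 1"
  shows "QQ m s - (gg m)\<^sup>2 / PP m s = 0"
proof -
  have p: "0 < PP m s" by (rule PP_pos[OF assms(1,2)])
  show ?thesis using PQ_cases(2)[OF assms(1,2) assms(3)] p by (simp add: field_simps)
qed

lemma tau_pos:
  assumes "m \<ge> 4" "2 \<le> s" "s \<le> m - 2"
  shows "0 < tau m s"
proof -
  have sm: "s < m" using assms by linarith
  have p: "0 < PP m s" by (rule PP_pos[OF assms(1) sm])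
  have "(gg m)\<^sup>2 / PP m s < QQ m s"
    using PQ_cases(3)[OF assms(1) sm assms(2,3)] p by (simp add: divide_less_eq mult.commute)
  then show ?thesis unfolding tau_def by simp
qed




definition MV :: "nat \<Rightarrow> complex mat" where
  "MV m = mat (2*m-3) m (\<lambda>(r,i). if r < m then ee m r * E m (real r * real i) else 0)"

definition MW :: "nat \<Rightarrow> complex mat" where
  "MW m = mat (2*m-3) m (\<lambda>(r,i). if r < m then complex_of_real (gg m) / cnj (ee m r) * E m (real r * real i)
      else complex_of_real (tau m (r + 2 - m)) * E m (real (r + 2 - m) * real i))"

lemma cprod_col:
  assumes "A \<in> carrier_mat n m'" "B \<in> carrier_mat n m''" "i < m'" "j < m''"
  shows "col A i \<bullet>c col B j = (\<Sum>r<n. A $$ (r,i) * cnj (B $$ (r,j)))"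
  using assms unfolding scalar_prod_def by (auto intro!: sum.cong simp: lessThan_atLeast0)

lemma sum_split_2m:
  fixes m :: nat
  assumes "m \<ge> 4"
  shows "(\<Sum>r<2*m-3. f r) = (\<Sum>r<m. f r) + (\<Sum>s\<in>{2..<m-1}. f (s + (m - 2)))"
proof -
  have "(\<Sum>r<2*m-3. f r) = (\<Sum>r\<in>{0..<m}. f r) + (\<Sum>r\<in>{m..<2*m-3}. f r)"
    using assms by (simp add: lessThan_atLeast0 sum.atLeastLessThan_concat)
  also have "{m..<2*m-3} = {2 + (m-2)..<(m-1) + (m-2)}" using assms by auto
  also have "(\<Sum>r\<in>\<dots>. f r) = (\<Sum>s\<in>{2..<m-1}. f (s + (m - 2)))"
    by (rule sum.shift_bounds_nat_ivl)
  finally show ?thesis by (simp add: lessThan_atLeast0)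
qed

lemma MV_carrier: "MV m \<in> carrier_mat (2*m-3) m" unfolding MV_def by simp
lemma MW_carrier: "MW m \<in> carrier_mat (2*m-3) m" unfolding MW_def by simp

lemma MV_idx: "r < 2*m-3 \<Longrightarrow> i < m \<Longrightarrow> MV m $$ (r,i) = (if r < m then ee m r * E m (real r * real i) else 0)"
  unfolding MV_def by simp
lemma MW_idx: "r < 2*m-3 \<Longrightarrow> i < m \<Longrightarrow> MW m $$ (r,i) = (if r < m then complex_of_real (gg m) / cnj (ee m r) * E m (real r * real i)
      else complex_of_real (tau m (r + 2 - m)) * E m (real (r + 2 - m) * real i))"
  unfolding MW_def by simp

lemma geo_sum':
  assumes "m > 0" "real_of_int d = x" "\<not> int m dvd d"
  shows "(\<Sum>r<m. E m (real r * x)) = 0"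
  using geo_sum[OF assms(1), of d] assms(2,3) by simp

lemma mod_conds:
  fixes m :: nat and i j :: nat
  assumes "m \<ge> 4" "(int j - int i) mod int m \<notin> {0, 1, int m - 1}"
  shows "\<not> int m dvd (int i - int j)" "\<not> int m dvd (int i - int j + 1)" "\<not> int m dvd (int i - int j - 1)"
proof -
  have m1: "(1::int) mod int m = 1" using assms by simp
  have m2: "(-1::int) mod int m = int m - 1" using assms by (simp add: zmod_minus1)
  show "\<not> int m dvd (int i - int j)"
  proof
    assume "int m dvd (int i - int j)"
    then have "int m dvd (int j - int i)" by (simp add: dvd_diff_commute)
    then show False using assms(2) by auto
  qed
  show "\<not> int m dvd (int i - int j + 1)"
  proof
    assume "int m dvd (int i - int j + 1)"
    then have "int m dvd (int j - int i - 1)"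
      by (metis dvd_minus_iff minus_diff_eq diff_diff_eq2 add.commute diff_add_eq)
    then have "(int j - int i) mod int m = 1 mod int m" by (simp add: mod_eq_dvd_iff)
    then show False using assms(2) m1 by auto
  qed
  show "\<not> int m dvd (int i - int j - 1)"
  proof
    assume "int m dvd (int i - int j - 1)"
    then have "int m dvd (int j - int i - (-1))"
      by (metis dvd_minus_iff minus_diff_eq diff_minus_eq_add add.commute diff_diff_eq)
    then have "(int j - int i) mod int m = (-1) mod int m" by (simp add: mod_eq_dvd_iff)
    then show False using assms(2) m2 by auto
  qed
qed

lemma orth_vv:
  assumes m4: "m \<ge> 4" and ij: "i < m" "j < m" and cond: "(int j - int i) mod int m \<notin> {0, 1, int m - 1}"
  shows "col (MV m) i \<bullet>c col (MV m) j = 0"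
proof -
  let ?x = "real i - real j"
  have "col (MV m) i \<bullet>c col (MV m) j = (\<Sum>r<2*m-3. MV m $$ (r,i) * cnj (MV m $$ (r,j)))"
    by (rule cprod_col[OF MV_carrier MV_carrier ij])
  also have "\<dots> = (\<Sum>r<m. MV m $$ (r,i) * cnj (MV m $$ (r,j))) + (\<Sum>s\<in>{2..<m-1}. MV m $$ (s + (m-2),i) * cnj (MV m $$ (s + (m-2),j)))"
    by (rule sum_split_2m[OF m4])
  also have "(\<Sum>s\<in>{2..<m-1}. MV m $$ (s + (m-2),i) * cnj (MV m $$ (s + (m-2),j))) = 0"
    using m4 ij by (intro sum.neutral) (auto simp: MV_idx)
  also have "(\<Sum>r<m. MV m $$ (r,i) * cnj (MV m $$ (r,j))) =
      (\<Sum>r<m. 2 * E m (real r * ?x) - cnj (eta m) * E m (real r * (?x + 1)) - eta m * E m (real r * (?x - 1)))"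
  proof (rule sum.cong[OF refl])
    fix r assume r: "r \<in> {..<m}"
    have "MV m $$ (r,i) * cnj (MV m $$ (r,j)) = (ee m r * cnj (ee m r)) * (E m (real r * real i) * E m (- (real r * real j)))"
      using r ij m4 by (simp add: MV_idx E_cnj)
    also have "ee m r * cnj (ee m r) = complex_of_real (PP m r)" unfolding PP_def by (rule complex_norm_square[symmetric])
    also have "E m (real r * real i) * E m (- (real r * real j)) = E m (real r * ?x)"
      by (simp add: E_mult algebra_simps)
    finally show "MV m $$ (r,i) * cnj (MV m $$ (r,j)) = 2 * E m (real r * ?x) - cnj (eta m) * E m (real r * (?x + 1)) - eta m * E m (real r * (?x - 1))"
      unfolding PP_complex[OF m4] by (simp add: E_mult algebra_simps)
  qed
  also have "\<dots> = 2 * (\<Sum>r<m. E m (real r * ?x)) - cnj (eta m) * (\<Sum>r<m. E m (real r * (?x + 1))) - eta m * (\<Sum>r<m. E m (real r * (?x - 1)))"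
    by (simp add: sum_subtractf sum_distrib_left)
  also have "\<dots> = 0"
  proof -
    have m0: "m > 0" using m4 by simp
    note mc = mod_conds[OF m4 cond]
    have "(\<Sum>r<m. E m (real r * ?x)) = 0" by (rule geo_sum'[OF m0 _ mc(1)]) simp
    moreover have "(\<Sum>r<m. E m (real r * (?x + 1))) = 0" by (rule geo_sum'[OF m0 _ mc(2)]) simp
    moreover have "(\<Sum>r<m. E m (real r * (?x - 1))) = 0" by (rule geo_sum'[OF m0 _ mc(3)]) simp
    ultimately show ?thesis by simp
  qed
  finally show ?thesis by simp
qed

lemma orth_ww:
  assumes m4: "m \<ge> 4" and ij: "i < m" "j < m" and cond: "(int j - int i) mod int m \<notin> {0, 1, int m - 1}"
  shows "col (MW m) i \<bullet>c col (MW m) j = 0"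
proof -
  let ?x = "real i - real j"
  let ?g = "gg m"
  define f where "f r = complex_of_real (QQ m r - ?g\<^sup>2 / PP m r) * E m (real r * ?x)" for r
  have "col (MW m) i \<bullet>c col (MW m) j = (\<Sum>r<2*m-3. MW m $$ (r,i) * cnj (MW m $$ (r,j)))"
    by (rule cprod_col[OF MW_carrier MW_carrier ij])
  also have "\<dots> = (\<Sum>r<m. MW m $$ (r,i) * cnj (MW m $$ (r,j))) + (\<Sum>s\<in>{2..<m-1}. MW m $$ (s + (m-2),i) * cnj (MW m $$ (s + (m-2),j)))"
    by (rule sum_split_2m[OF m4])
  also have "(\<Sum>s\<in>{2..<m-1}. MW m $$ (s + (m-2),i) * cnj (MW m $$ (s + (m-2),j))) = (\<Sum>s\<in>{2..<m-1}. f s)"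
  proof (rule sum.cong[OF refl])
    fix s assume s: "s \<in> {2..<m-1}"
    have lt: "s + (m-2) < 2*m-3" and nlt: "\<not> s + (m-2) < m" and e1: "s + (m-2) + 2 - m = s"
      using s m4 by auto
    have idx: "MW m $$ (s + (m-2), i') = complex_of_real (tau m s) * E m (real s * real i')" if "i' < m" for i'
      using MW_idx[OF lt that] by (simp only: nlt if_False e1)
    have "MW m $$ (s + (m-2),i) * cnj (MW m $$ (s + (m-2),j)) =
       complex_of_real ((tau m s)\<^sup>2) * (E m (real s * real i) * E m (- (real s * real j)))"
      unfolding idx[OF ij(1)] idx[OF ij(2)] by (simp add: E_cnj power2_eq_square)
    also have "(tau m s)\<^sup>2 = QQ m s - ?g\<^sup>2 / PP m s" using s by (intro tau_sq[OF m4]) auto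
    also have "E m (real s * real i) * E m (- (real s * real j)) = E m (real s * ?x)"
      by (simp add: E_mult algebra_simps)
    finally show "MW m $$ (s + (m-2),i) * cnj (MW m $$ (s + (m-2),j)) = f s" unfolding f_def .
  qed
  also have "(\<Sum>s\<in>{2..<m-1}. f s) = (\<Sum>s<m. f s)"
  proof (rule sum.mono_neutral_left)
    show "\<forall>s\<in>{..<m} - {2..<m-1}. f s = 0"
    proof
      fix s assume s: "s \<in> {..<m} - {2..<m-1}"
      then have "s < m" "s = 0 \<or> s = 1 \<or> s = m - 1" by auto
      then show "f s = 0" unfolding f_def using tau_zero[OF m4] by simp
    qed
  qed auto
  also have "(\<Sum>r<m. MW m $$ (r,i) * cnj (MW m $$ (r,j))) = (\<Sum>r<m. complex_of_real (?g\<^sup>2 / PP m r) * E m (real r * ?x))"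
  proof (rule sum.cong[OF refl])
    fix r assume r: "r \<in> {..<m}"
    have ne: "ee m r \<noteq> 0" using ee_nonzero[OF m4] r by simp
    have "MW m $$ (r,i) * cnj (MW m $$ (r,j)) = complex_of_real (?g\<^sup>2) / (ee m r * cnj (ee m r)) * (E m (real r * real i) * E m (- (real r * real j)))"
      using r ij m4 ne by (simp add: MW_idx E_cnj power2_eq_square mult_ac)
    also have "ee m r * cnj (ee m r) = complex_of_real (PP m r)" unfolding PP_def by (rule complex_norm_square[symmetric])
    also have "E m (real r * real i) * E m (- (real r * real j)) = E m (real r * ?x)"
      by (simp add: E_mult algebra_simps)
    finally show "MW m $$ (r,i) * cnj (MW m $$ (r,j)) = complex_of_real (?g\<^sup>2 / PP m r) * E m (real r * ?x)" by simp
  qed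
  also have "(\<Sum>r<m. complex_of_real (?g\<^sup>2 / PP m r) * E m (real r * ?x)) + (\<Sum>s<m. f s)
      = (\<Sum>r<m. 2 * E m (real r * ?x) - eta m * E m (real r * (?x + 1)) - cnj (eta m) * E m (real r * (?x - 1)))"
    unfolding sum.distrib[symmetric]
  proof (rule sum.cong[OF refl])
    fix r assume r: "r \<in> {..<m}"
    have "complex_of_real (?g\<^sup>2 / PP m r) * E m (real r * ?x) + f r = complex_of_real (QQ m r) * E m (real r * ?x)"
      unfolding f_def by (simp add: algebra_simps)
    also have "\<dots> = 2 * E m (real r * ?x) - eta m * E m (real r * (?x + 1)) - cnj (eta m) * E m (real r * (?x - 1))"
      unfolding QQ_complex[OF m4] by (simp add: E_mult algebra_simps)
    finally show "complex_of_real (?g\<^sup>2 / PP m r) * E m (real r * ?x) + f r = \<dots>" .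
  qed
  also have "\<dots> = 2 * (\<Sum>r<m. E m (real r * ?x)) - eta m * (\<Sum>r<m. E m (real r * (?x + 1))) - cnj (eta m) * (\<Sum>r<m. E m (real r * (?x - 1)))"
    by (simp add: sum_subtractf sum_distrib_left)
  also have "\<dots> = 0"
  proof -
    have m0: "m > 0" using m4 by simp
    note mc = mod_conds[OF m4 cond]
    have "(\<Sum>r<m. E m (real r * ?x)) = 0" by (rule geo_sum'[OF m0 _ mc(1)]) simp
    moreover have "(\<Sum>r<m. E m (real r * (?x + 1))) = 0" by (rule geo_sum'[OF m0 _ mc(2)]) simp
    moreover have "(\<Sum>r<m. E m (real r * (?x - 1))) = 0" by (rule geo_sum'[OF m0 _ mc(3)]) simp
    ultimately show ?thesis by simp
  qed
  finally show ?thesis .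
qed

lemma orth_vw:
  assumes m4: "m \<ge> 4" and ij: "i < m" "j < m" "i \<noteq> j"
  shows "col (MV m) i \<bullet>c col (MW m) j = 0"
proof -
  let ?x = "real i - real j"
  have "col (MV m) i \<bullet>c col (MW m) j = (\<Sum>r<2*m-3. MV m $$ (r,i) * cnj (MW m $$ (r,j)))"
    by (rule cprod_col[OF MV_carrier MW_carrier ij(1,2)])
  also have "\<dots> = (\<Sum>r<m. MV m $$ (r,i) * cnj (MW m $$ (r,j))) + (\<Sum>s\<in>{2..<m-1}. MV m $$ (s + (m-2),i) * cnj (MW m $$ (s + (m-2),j)))"
    by (rule sum_split_2m[OF m4])
  also have "(\<Sum>s\<in>{2..<m-1}. MV m $$ (s + (m-2),i) * cnj (MW m $$ (s + (m-2),j))) = 0"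
    using m4 ij by (intro sum.neutral) (auto simp: MV_idx)
  also have "(\<Sum>r<m. MV m $$ (r,i) * cnj (MW m $$ (r,j))) = (\<Sum>r<m. complex_of_real (gg m) * E m (real r * ?x))"
  proof (rule sum.cong[OF refl])
    fix r assume r: "r \<in> {..<m}"
    have ne: "ee m r \<noteq> 0" using ee_nonzero[OF m4] r by simp
    have "MV m $$ (r,i) * cnj (MW m $$ (r,j)) = complex_of_real (gg m) * (ee m r / ee m r) * (E m (real r * real i) * E m (- (real r * real j)))"
      using r ij m4 by (simp add: MV_idx MW_idx E_cnj)
    also have "E m (real r * real i) * E m (- (real r * real j)) = E m (real r * ?x)"
      by (simp add: E_mult algebra_simps)
    finally show "MV m $$ (r,i) * cnj (MW m $$ (r,j)) = complex_of_real (gg m) * E m (real r * ?x)" using ne by simp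
  qed
  also have "\<dots> = complex_of_real (gg m) * (\<Sum>r<m. E m (real r * ?x))" by (simp add: sum_distrib_left)
  also have "(\<Sum>r<m. E m (real r * ?x)) = 0"
  proof (rule geo_sum')
    show "m > 0" using m4 by simp
    show "real_of_int (int i - int j) = ?x" by simp
    show "\<not> int m dvd (int i - int j)"
    proof
      assume "int m dvd (int i - int j)"
      then obtain t where t: "int i - int j = int m * t" by auto
      have "\<bar>int i - int j\<bar> < int m" using ij by auto
      then have "int m * \<bar>t\<bar> < int m * 1" using t by (simp add: abs_mult)
      then have "\<bar>t\<bar> < 1" using m4 by (simp only: mult_less_cancel_left_pos of_nat_0_less_iff)
      then have "t = 0" by simp
      then show False using t ij by simp
    qed
  qed
  finally show ?thesis by simp
qed




lemma dvd_small_iff: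
  fixes m l i :: nat
  assumes "l < m" "i < m"
  shows "int m dvd (int l - int i) \<longleftrightarrow> l = i"
proof
  assume "int m dvd (int l - int i)"
  then obtain t where t: "int l - int i = int m * t" by auto
  have "\<bar>int l - int i\<bar> < int m" using assms by auto
  then have "int m * \<bar>t\<bar> < int m * 1" using t by (simp add: abs_mult)
  then have "\<bar>t\<bar> < 1" using assms by (simp only: mult_less_cancel_left_pos of_nat_0_less_iff)
  then have "t = 0" by simp
  then show "l = i" using t by simp
qed simp

lemma dft_inv:
  assumes "m > 0" "i < m"
  shows "(\<Sum>s<m. (\<Sum>l<m. f l * E m (real s * real l)) * E m (- (real s * real i))) = of_nat m * f i"
proof -
  have "(\<Sum>s<m. (\<Sum>l<m. f l * E m (real s * real l)) * E m (- (real s * real i)))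
      = (\<Sum>s<m. \<Sum>l<m. f l * E m (real s * (real l - real i)))"
  proof (rule sum.cong[OF refl])
    fix s
    have "(\<Sum>l<m. f l * E m (real s * real l)) * E m (- (real s * real i))
        = (\<Sum>l<m. f l * (E m (real s * real l) * E m (- (real s * real i))))"
      by (simp add: sum_distrib_right mult.assoc)
    also have "\<dots> = (\<Sum>l<m. f l * E m (real s * (real l - real i)))"
      by (simp add: E_mult algebra_simps)
    finally show "(\<Sum>l<m. f l * E m (real s * real l)) * E m (- (real s * real i))
        = (\<Sum>l<m. f l * E m (real s * (real l - real i)))" .
  qed
  also have "\<dots> = (\<Sum>l<m. \<Sum>s<m. f l * E m (real s * (real l - real i)))" by (rule sum.swap)
  also have "\<dots> = (\<Sum>l<m. f l * (if l = i then of_nat m else 0))"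
  proof (rule sum.cong[OF refl])
    fix l assume l: "l \<in> {..<m}"
    have "(\<Sum>s<m. E m (real s * (real l - real i))) = (if int m dvd (int l - int i) then of_nat m else 0)"
      using geo_sum[OF assms(1), of "int l - int i"] by simp
    then show "(\<Sum>s<m. f l * E m (real s * (real l - real i))) = f l * (if l = i then of_nat m else 0)"
      using dvd_small_iff[of l m i] l assms by (simp add: sum_distrib_left[symmetric])
  qed
  also have "\<dots> = of_nat m * f i" using assms by (simp add: if_distrib cong: if_cong)
  finally show ?thesis .
qed

lemma E_shift:
  assumes "m > 0"
  shows "E m (x + real m * of_int k) = E m x"
proof -
  have "E m (real m * of_int k) = 1"
    using E_int_eq_1_iff[OF assms, of "int m * k"] by simp
  then show ?thesis using E_mult[of m x "real m * of_int k"] by simp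
qed




lemma recon:
  fixes y F :: "nat \<Rightarrow> complex"
  assumes m4: "m \<ge> 4" and i: "i < m"
    and Fdef: "\<And>s. F s = (\<Sum>l<m. y l * E m (real s * real l))"
    and Fz: "\<And>s. 2 \<le> s \<Longrightarrow> s \<le> m - 2 \<Longrightarrow> F s = 0"
  shows "of_nat m * E m (real i) * y i = F (m-1) * (E m (real i))\<^sup>2 + F 0 * E m (real i) + F 1"
proof -
  have m0: "m > 0" using m4 by simp
  have "of_nat m * y i = (\<Sum>s<m. F s * E m (- (real s * real i)))"
    unfolding Fdef using dft_inv[OF m0 i, of y] by simp
  also have "\<dots> = (\<Sum>s\<in>{0,1,m-1}. F s * E m (- (real s * real i)))"
  proof (rule sum.mono_neutral_right)
    show "\<forall>s\<in>{..<m} - {0, 1, m - 1}. F s * E m (- (real s * real i)) = 0"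
    proof
      fix s assume "s \<in> {..<m} - {0, 1, m - 1}"
      then have "2 \<le> s" "s \<le> m - 2" by auto
      then show "F s * E m (- (real s * real i)) = 0" using Fz by simp
    qed
  qed (use m4 in auto)
  also have "\<dots> = F 0 + F 1 * E m (- real i) + F (m-1) * E m (- (real (m-1) * real i))"
    using m4 by (simp add: algebra_simps)
  also have "E m (- (real (m-1) * real i)) = E m (real i)"
  proof -
    have "- (real (m-1) * real i) = real i + real m * of_int (- int i)"
      using m4 by (simp add: of_nat_diff algebra_simps)
    then show ?thesis using E_shift[OF m0, of "real i" "- int i"] by simp
  qed
  finally have h: "of_nat m * y i = F 0 + F 1 * E m (- real i) + F (m-1) * E m (real i)" .
  have inv: "E m (- real i) * E m (real i) = 1" by (simp add: E_mult)
  have "of_nat m * E m (real i) * y i = E m (real i) * (of_nat m * y i)" by (simp add: mult_ac)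
  also have "\<dots> = F 0 * E m (real i) + F 1 * (E m (- real i) * E m (real i)) + F (m-1) * (E m (real i))\<^sup>2"
    unfolding h by (simp add: algebra_simps power2_eq_square)
  finally show ?thesis unfolding inv by (simp add: algebra_simps)
qed

lemma kernel:
  fixes yv yw :: "nat \<Rightarrow> complex"
  assumes m4: "m \<ge> 4"
    and rows: "\<And>r. r < 2*m-3 \<Longrightarrow> (\<Sum>i<m. MV m $$ (r,i) * yv i) + (\<Sum>i<m. MW m $$ (r,i) * yw i) = 0"
  shows "\<exists>a b c. \<forall>i<m. of_nat m * E m (real i) * yv i = a * (E m (real i))\<^sup>2 + b * E m (real i) + c
     \<and> of_nat m * E m (real i) * yw i = - (complex_of_real (PP m (m-1) / gg m) * a * (E m (real i))\<^sup>2
         + b * E m (real i) + complex_of_real (PP m 1 / gg m) * c)"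
proof -
  define Fv where "Fv s = (\<Sum>l<m. yv l * E m (real s * real l))" for s
  define Fw where "Fw s = (\<Sum>l<m. yw l * E m (real s * real l))" for s
  have g0: "complex_of_real (gg m) \<noteq> 0" using gg_pos[OF m4] by simp
  have rowA: "ee m s * Fv s + complex_of_real (gg m) / cnj (ee m s) * Fw s = 0" if s: "s < m" for s
  proof -
    have s2: "s < 2*m-3" using s m4 by simp
    have "(\<Sum>i<m. MV m $$ (s,i) * yv i) = ee m s * Fv s"
      unfolding Fv_def sum_distrib_left using s s2 by (intro sum.cong) (auto simp: MV_idx mult_ac)
    moreover have "(\<Sum>i<m. MW m $$ (s,i) * yw i) = complex_of_real (gg m) / cnj (ee m s) * Fw s"
      unfolding Fw_def sum_distrib_left using s s2 by (intro sum.cong) (auto simp: MW_idx mult_ac)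
    ultimately show ?thesis using rows[OF s2] by simp
  qed
  have rowB: "Fw s = 0" if s: "2 \<le> s" "s \<le> m - 2" for s
  proof -
    have lt: "s + (m-2) < 2*m-3" and nlt: "\<not> s + (m-2) < m" and e1: "s + (m-2) + 2 - m = s"
      using s m4 by auto
    have "(\<Sum>i<m. MV m $$ (s + (m-2),i) * yv i) = 0"
      using lt nlt by (intro sum.neutral) (auto simp: MV_idx)
    moreover have "(\<Sum>i<m. MW m $$ (s + (m-2),i) * yw i) = complex_of_real (tau m s) * Fw s"
      unfolding Fw_def sum_distrib_left
    proof (rule sum.cong[OF refl])
      fix i assume "i \<in> {..<m}"
      then have "MW m $$ (s + (m-2), i) = complex_of_real (tau m s) * E m (real s * real i)"
        using MW_idx[OF lt] by (simp only: nlt if_False e1) simp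
      then show "MW m $$ (s + (m-2),i) * yw i = complex_of_real (tau m s) * (yw i * E m (real s * real i))"
        by (simp add: mult_ac)
    qed
    ultimately have "complex_of_real (tau m s) * Fw s = 0" using rows[OF lt] by simp
    moreover have "tau m s \<noteq> 0" using tau_pos[OF m4 s] by simp
    ultimately show ?thesis by simp
  qed
  have rowC: "Fv s = 0" if s: "2 \<le> s" "s \<le> m - 2" for s
  proof -
    have sm: "s < m" using s m4 by linarith
    have "ee m s * Fv s = 0" using rowA[OF sm] rowB[OF s] by simp
    then show ?thesis using ee_nonzero[OF m4 sm] by simp
  qed
  have relW: "Fw s = - complex_of_real (PP m s / gg m) * Fv s" if s: "s < m" for s
  proof -
    have ne: "cnj (ee m s) \<noteq> 0" using ee_nonzero[OF m4 s] by simp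
    have "ee m s * cnj (ee m s) = complex_of_real (PP m s)" unfolding PP_def by (rule complex_norm_square[symmetric])
    define e where "e = ee m s"
    define g where "g = complex_of_real (gg m)"
    have ee: "e * cnj e = complex_of_real (PP m s)" using \<open>ee m s * cnj (ee m s) = _\<close> e_def by simp
    have ne': "cnj e \<noteq> 0" and g0': "g \<noteq> 0" using ne g0 e_def g_def by auto
    have r: "g / cnj e * Fw s = - (e * Fv s)" using rowA[OF s] e_def g_def by (simp add: eq_neg_iff_add_eq_0 add.commute)
    have k: "cnj e / g * (g / cnj e) = 1" using ne' g0' by simp
    have "Fw s = cnj e / g * (g / cnj e * Fw s)" using ne' g0' by simp
    also have "\<dots> = - (e * cnj e) / g * Fv s" unfolding r by (simp add: mult_ac)
    also have "\<dots> = - complex_of_real (PP m s / gg m) * Fv s" unfolding ee g_def by simp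
    finally show ?thesis .
  qed
  have P0: "complex_of_real (PP m 0 / gg m) = 1" using g0 by (simp add: PP_0)
  show ?thesis
  proof (intro exI allI impI conjI)
    fix i assume i: "i < m"
    show "of_nat m * E m (real i) * yv i = Fv (m-1) * (E m (real i))\<^sup>2 + Fv 0 * E m (real i) + Fv 1"
      by (rule recon[OF m4 i Fv_def rowC])
    have "of_nat m * E m (real i) * yw i = Fw (m-1) * (E m (real i))\<^sup>2 + Fw 0 * E m (real i) + Fw 1"
      by (rule recon[OF m4 i Fw_def rowB])
    also have "\<dots> = - (complex_of_real (PP m (m-1) / gg m) * Fv (m-1) * (E m (real i))\<^sup>2
         + Fv 0 * E m (real i) + complex_of_real (PP m 1 / gg m) * Fv 1)"
    proof -
      have w0: "Fw 0 = - Fv 0" using relW[of 0] P0 m4 by simp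
      have w1: "Fw 1 = - complex_of_real (PP m 1 / gg m) * Fv 1" using relW[of 1] m4 by simp
      have wl: "Fw (m-1) = - complex_of_real (PP m (m-1) / gg m) * Fv (m-1)" using relW[of "m-1"] m4 by simp
      show ?thesis unfolding w0 w1 wl by (simp add: algebra_simps)
    qed
    finally show "of_nat m * E m (real i) * yw i = - (complex_of_real (PP m (m-1) / gg m) * Fv (m-1) * (E m (real i))\<^sup>2
         + Fv 0 * E m (real i) + complex_of_real (PP m 1 / gg m) * Fv 1)" .
  qed
qed




lemma quad3:
  fixes a b c t1 t2 t3 :: complex
  assumes d: "t1 \<noteq> t2" "t1 \<noteq> t3" "t2 \<noteq> t3"
    and r: "a * t1\<^sup>2 + b * t1 + c = 0" "a * t2\<^sup>2 + b * t2 + c = 0" "a * t3\<^sup>2 + b * t3 + c = 0"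
  shows "a = 0 \<and> b = 0 \<and> c = 0"
proof -
  have e12: "(t1 - t2) * (a * (t1 + t2) + b) = 0"
  proof -
    have "(t1 - t2) * (a * (t1 + t2) + b) = (a * t1\<^sup>2 + b * t1 + c) - (a * t2\<^sup>2 + b * t2 + c)"
      by (simp add: algebra_simps power2_eq_square)
    then show ?thesis using r by simp
  qed
  have e13: "(t1 - t3) * (a * (t1 + t3) + b) = 0"
  proof -
    have "(t1 - t3) * (a * (t1 + t3) + b) = (a * t1\<^sup>2 + b * t1 + c) - (a * t3\<^sup>2 + b * t3 + c)"
      by (simp add: algebra_simps power2_eq_square)
    then show ?thesis using r by simp
  qed
  have f12: "a * (t1 + t2) + b = 0" using e12 d by simp
  have f13: "a * (t1 + t3) + b = 0" using e13 d by simp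
  have "a * (t2 - t3) = (a * (t1 + t2) + b) - (a * (t1 + t3) + b)" by (simp add: algebra_simps)
  then have "a * (t2 - t3) = 0" using f12 f13 by simp
  then have a: "a = 0" using d by simp
  then have b: "b = 0" using f12 by simp
  then have "c = 0" using r(1) a by simp
  then show ?thesis using a b by simp
qed

lemma E_inj:
  assumes "m > 0" "i < m" "j < m" "E m (real i) = E m (real j)"
  shows "i = j"
proof -
  have "E m (real_of_int (int i - int j)) = E m (real i) * E m (- real j)"
    by (simp add: E_mult)
  also have "\<dots> = 1" using assms(4) E_mult[of m "real j" "- real j"] by simp
  finally have "int m dvd (int i - int j)" using E_int_eq_1_iff[OF assms(1)] by blast
  then show ?thesis using dvd_small_iff[OF assms(2,3)] by simp
qed

lemma gp_core:
  fixes y :: "nat \<Rightarrow> complex"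
  assumes m4: "m \<ge> 4"
    and rows: "\<And>r. r < 2*m-3 \<Longrightarrow> (\<Sum>i<m. MV m $$ (r,i) * y i) + (\<Sum>i<m. MW m $$ (r,i) * y (m + i)) = 0"
    and p: "p1 < 2*m" "p2 < 2*m" "p3 < 2*m" "p1 \<noteq> p2" "p1 \<noteq> p3" "p2 \<noteq> p3"
    and z: "y p1 = 0" "y p2 = 0" "y p3 = 0"
  shows "\<forall>p<2*m. y p = 0"
proof -
  obtain a b c where K: "\<And>i. i < m \<Longrightarrow> of_nat m * E m (real i) * y i = a * (E m (real i))\<^sup>2 + b * E m (real i) + c
     \<and> of_nat m * E m (real i) * y (m + i) = - (complex_of_real (PP m (m-1) / gg m) * a * (E m (real i))\<^sup>2
         + b * E m (real i) + complex_of_real (PP m 1 / gg m) * c)"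
    using kernel[OF m4, of y "\<lambda>i. y (m + i)"] rows by blast
  define lam where "lam = PP m 1 / gg m"
  have gpos: "0 < gg m" by (rule gg_pos[OF m4])
  have P1pos: "0 < PP m 1" using PP_pos[OF m4] m4 by simp
  have lpos: "0 < lam" unfolding lam_def using gpos P1pos by simp
  have linv: "PP m (m-1) / gg m = 1 / lam"
  proof -
    have "PP m 1 * PP m (m-1) = (gg m)\<^sup>2" by (rule PP_1_last[OF m4])
    then show ?thesis unfolding lam_def using gpos P1pos by (simp add: field_simps power2_eq_square)
  qed
  have l1: "lam \<noteq> 1"
  proof
    assume "lam = 1"
    then have "PP m 1 = gg m" "PP m (m-1) = gg m" using linv gpos unfolding lam_def by auto
    then show False using PP_1_neq[OF m4] by simp
  qed
  define q where "q t = a * t\<^sup>2 + b * t + c" for t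
  define pt where "pt p = (if p < m then E m (real p) else E m (real (p - m)) / complex_of_real lam)" for p
  have m0: "(of_nat m :: complex) \<noteq> 0" using m4 by simp
  have root: "q (pt p) = 0" if pp: "p < 2*m" "y p = 0" for p
  proof (cases "p < m")
    case True
    then show ?thesis using K[OF True] pp unfolding q_def pt_def by simp
  next
    case False
    define i where "i = p - m"
    have i: "i < m" "p = m + i" using pp False i_def by auto
    define z where "z = E m (real i)"
    have h2: "of_nat m * z * y (m + i) = - (complex_of_real (PP m (m-1) / gg m) * a * z\<^sup>2
         + b * z + complex_of_real (PP m 1 / gg m) * c)" using K[OF i(1)] unfolding z_def by blast
    have y0: "y (m + i) = 0" using pp i by simp
    have "- (complex_of_real (PP m (m-1) / gg m) * a * z\<^sup>2
         + b * z + complex_of_real (PP m 1 / gg m) * c) = 0" using h2 unfolding y0 by simp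
    then have "complex_of_real (PP m (m-1) / gg m) * a * z\<^sup>2
         + b * z + complex_of_real (PP m 1 / gg m) * c = 0" by (simp only: neg_equal_0_iff_equal)
    then have "complex_of_real (1 / lam) * a * z\<^sup>2 + b * z + complex_of_real lam * c = 0"
      unfolding linv lam_def[symmetric] .
    moreover have "q (z / complex_of_real lam) = (complex_of_real (1 / lam) * a * z\<^sup>2 + b * z + complex_of_real lam * c) / complex_of_real lam"
      unfolding q_def using lpos by (simp add: field_simps power2_eq_square)
    ultimately show ?thesis unfolding pt_def z_def i_def using False by simp
  qed
  have inj: "pt p = pt p' \<Longrightarrow> p = p'" if "p < 2*m" "p' < 2*m" for p p'
  proof -
    assume eq: "pt p = pt p'"
    have nl: "cmod (E m x / complex_of_real lam) \<noteq> 1" for x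
      using lpos l1 by (simp add: norm_divide)
    have mpos: "m > 0" using m4 by simp
    show "p = p'"
    proof (cases "p < m"; cases "p' < m")
      assume "p < m" "p' < m" then show ?thesis using eq E_inj[OF mpos] unfolding pt_def by auto
    next
      assume "p < m" "\<not> p' < m" then show ?thesis using eq nl[of "real (p' - m)"] unfolding pt_def
        by (metis norm_E)
    next
      assume "\<not> p < m" "p' < m" then show ?thesis using eq nl[of "real (p - m)"] unfolding pt_def
        by (metis norm_E)
    next
      assume a1: "\<not> p < m" "\<not> p' < m"
      then have "E m (real (p - m)) = E m (real (p' - m))" using eq lpos unfolding pt_def by simp
      then have "p - m = p' - m" using E_inj[OF mpos] that a1 by simp
      then show ?thesis using a1 by simp
    qed
  qed
  have abc: "a = 0 \<and> b = 0 \<and> c = 0"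
  proof (rule quad3)
    show "pt p1 \<noteq> pt p2" "pt p1 \<noteq> pt p3" "pt p2 \<noteq> pt p3" using inj p by blast+
    show "a * (pt p1)\<^sup>2 + b * pt p1 + c = 0" using root[OF p(1) z(1)] unfolding q_def .
    show "a * (pt p2)\<^sup>2 + b * pt p2 + c = 0" using root[OF p(2) z(2)] unfolding q_def .
    show "a * (pt p3)\<^sup>2 + b * pt p3 + c = 0" using root[OF p(3) z(3)] unfolding q_def .
  qed
  show ?thesis
  proof (intro allI impI)
    fix p assume pp: "p < 2*m"
    show "y p = 0"
    proof (cases "p < m")
      case True
      then show ?thesis using K[OF True] abc m0 by simp
    next
      case False
      then have i: "p - m < m" "p = m + (p - m)" using pp by auto
      show ?thesis using K[OF i(1)] abc m0 i(2) by (metis mult_zero_left mult_zero_right add_0 neg_equal_0_iff_equal E_nonzero mult_eq_0_iff)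
    qed
  qed
qed




lemma det_nonzero:
  fixes m :: nat
  assumes m4: "m \<ge> 4" and J: "J \<subseteq> {..<2*m}" "card J = 2*m-3"
  shows "det (submatrix (block_cols (MV m) (MW m)) UNIV J) \<noteq> 0"
proof
  let ?B = "block_cols (MV m) (MW m)"
  let ?n = "2*m-3"
  let ?A = "submatrix ?B UNIV J"
  assume det0: "det ?A = 0"
  have Bdim: "dim_row ?B = ?n" "dim_col ?B = 2*m"
    unfolding block_cols_def using MV_carrier[of m] MW_carrier[of m] by auto
  have Bidx: "?B $$ (r,p) = (if p < m then MV m $$ (r,p) else MW m $$ (r, p - m))" if "r < ?n" "p < 2*m" for r p
    unfolding block_cols_def using that MV_carrier[of m] MW_carrier[of m] by auto
  have cJ: "{j. j < dim_col ?B \<and> j \<in> J} = J" using J Bdim by auto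
  have Acar: "?A \<in> carrier_mat ?n ?n"
    unfolding submatrix_def carrier_mat_def using Bdim cJ J by simp
  obtain x where x: "x \<in> carrier_vec ?n" "x \<noteq> 0\<^sub>v ?n" "?A *\<^sub>v x = 0\<^sub>v ?n"
    using det0 det_0_iff_vec_prod_zero[OF Acar] by blast
  have finJ: "finite J" using J finite_subset by blast
  define idx where "idx p = card {a\<in>J. a < p}" for p
  define y where "y p = (if p \<in> J then x $ idx p else 0)" for p
  have idx_lt: "idx p < card J" if "p \<in> J" for p
  proof -
    have "{a\<in>J. a < p} \<subset> J" using that by auto
    then show ?thesis unfolding idx_def using finJ by (simp add: psubset_card_mono)
  qed
  have pick_in: "pick J j \<in> J" if "j < card J" for j using pick_in_set that by blast
  have idx_pick: "idx (pick J j) = j" if "j < card J" for j unfolding idx_def using card_pick that by blast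
  have pick_idx: "pick J (idx p) = p" if "p \<in> J" for p unfolding idx_def using pick_card_in_set that by blast
  have Aidx: "?A $$ (r,j) = ?B $$ (r, pick J j)" if "r < ?n" "j < ?n" for r j
    using that Bdim cJ J unfolding submatrix_def by (simp add: pick_UNIV)
  have rowsB: "(\<Sum>p<2*m. ?B $$ (r,p) * y p) = 0" if r: "r < ?n" for r
  proof -
    have "(\<Sum>p<2*m. ?B $$ (r,p) * y p) = (\<Sum>p\<in>J. ?B $$ (r,p) * x $ idx p)"
    proof (rule sum.mono_neutral_cong_right)
      show "finite {..<2*m}" by simp
      show "J \<subseteq> {..<2*m}" by (rule J(1))
      show "\<forall>p\<in>{..<2 * m} - J. ?B $$ (r,p) * y p = 0" unfolding y_def by simp
      show "\<And>p. p \<in> J \<Longrightarrow> ?B $$ (r,p) * y p = ?B $$ (r,p) * x $ idx p" unfolding y_def by simp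
    qed
    also have "\<dots> = (\<Sum>j<?n. ?B $$ (r, pick J j) * x $ j)"
    proof (rule sum.reindex_bij_witness[where i="pick J" and j=idx])
      show "\<And>a. a \<in> J \<Longrightarrow> pick J (idx a) = a" using pick_idx by auto
      show "\<And>a. a \<in> J \<Longrightarrow> idx a \<in> {..<?n}" using idx_lt J by auto
      show "\<And>b. b \<in> {..<?n} \<Longrightarrow> idx (pick J b) = b" using idx_pick J by auto
      show "\<And>b. b \<in> {..<?n} \<Longrightarrow> pick J b \<in> J" using pick_in J by auto
      show "\<And>a. a \<in> J \<Longrightarrow> ?B $$ (r, pick J (idx a)) * x $ idx a = ?B $$ (r, a) * x $ idx a"
        using pick_idx by auto
    qed
    also have "\<dots> = (?A *\<^sub>v x) $ r"
      using r x(1) Acar by (auto simp: mult_mat_vec_def scalar_prod_def Aidx lessThan_atLeast0 intro!: sum.cong)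
    also have "\<dots> = 0" using x(3) r by simp
    finally show ?thesis .
  qed
  have rows: "(\<Sum>i<m. MV m $$ (r,i) * y i) + (\<Sum>i<m. MW m $$ (r,i) * y (m + i)) = 0" if r: "r < ?n" for r
  proof -
    have "(\<Sum>p<2*m. ?B $$ (r,p) * y p) = (\<Sum>p\<in>{0..<m}. ?B $$ (r,p) * y p) + (\<Sum>p\<in>{m..<2*m}. ?B $$ (r,p) * y p)"
      by (simp add: lessThan_atLeast0 sum.atLeastLessThan_concat)
    also have "(\<Sum>p\<in>{0..<m}. ?B $$ (r,p) * y p) = (\<Sum>i<m. MV m $$ (r,i) * y i)"
      using r by (auto simp: Bidx lessThan_atLeast0 intro!: sum.cong)
    also have "(\<Sum>p\<in>{m..<2*m}. ?B $$ (r,p) * y p) = (\<Sum>i\<in>{0..<m}. ?B $$ (r,i + m) * y (i + m))"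
      using sum.shift_bounds_nat_ivl[of "\<lambda>p. ?B $$ (r,p) * y p" 0 m m] by (simp add: mult_2)
    also have "\<dots> = (\<Sum>i<m. MW m $$ (r,i) * y (m + i))"
      using r by (auto simp: Bidx lessThan_atLeast0 add.commute intro!: sum.cong)
    finally show ?thesis using rowsB[OF r] by simp
  qed
  have cZ: "card ({..<2*m} - J) = 3" using J m4 by (simp add: card_Diff_subset finJ)
  then obtain p1 p2 p3 where Z: "{..<2*m} - J = {p1,p2,p3}" "p1 \<noteq> p2" "p2 \<noteq> p3" "p1 \<noteq> p3"
    unfolding card_3_iff by blast
  have pz: "p1 < 2*m" "p2 < 2*m" "p3 < 2*m" "y p1 = 0" "y p2 = 0" "y p3 = 0"
    using Z(1) unfolding y_def by (auto simp: set_eq_iff)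
  have allz: "\<forall>p<2*m. y p = 0"
    by (rule gp_core[OF m4 rows pz(1-3) Z(2,4,3) pz(4-6)])
  have "x = 0\<^sub>v ?n"
  proof (rule eq_vecI)
    show "dim_vec x = dim_vec (0\<^sub>v ?n)" using x(1) by simp
    fix j assume "j < dim_vec (0\<^sub>v ?n)"
    then have j: "j < card J" using J by simp
    have "y (pick J j) = x $ j" unfolding y_def using pick_in[OF j] idx_pick[OF j] by simp
    moreover have "pick J j < 2*m" using pick_in[OF j] J by auto
    ultimately show "x $ j = 0\<^sub>v ?n $ j" using allz j J by simp
  qed
  then show False using x(2) by simp
qed


theorem lemma3:
  fixes k :: nat
  assumes "k \<ge> 1"
  shows "\<exists>Wv Ww :: complex mat.
    Wv \<in> carrier_mat (4*k+1) (2*k+2) \<and> Ww \<in> carrier_mat (4*k+1) (2*k+2) \<and>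
    (\<forall>i<2*k+2. \<forall>j<2*k+2.
       (int j - int i) mod int (2*k+2) \<notin> {0, 1, int (2*k+1)} \<longrightarrow> orth (col Wv i) (col Wv j)) \<and>
    (\<forall>i<2*k+2. \<forall>j<2*k+2.
       (int j - int i) mod int (2*k+2) \<notin> {0, 1, int (2*k+1)} \<longrightarrow> orth (col Ww i) (col Ww j)) \<and>
    (\<forall>i<2*k+2. \<forall>j<2*k+2. i \<noteq> j \<longrightarrow> orth (col Wv i) (col Ww j)) \<and>
    (\<forall>J. J \<subseteq> {..<4*k+4} \<and> card J = 4*k+1 \<longrightarrow>
       det (submatrix (block_cols Wv Ww) UNIV J) \<noteq> 0)"
proof -
  define m where "m = 2*k+2"
  have m4: "m \<ge> 4" using assms m_def by simp
  have n: "2*m-3 = 4*k+1" "2*m = 4*k+4" using m_def by simp_all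
  have cond: "int (2*k+1) = int m - 1" using m_def by simp
  show ?thesis
  proof (intro exI conjI allI impI)
    show "MV m \<in> carrier_mat (4*k+1) (2*k+2)" using MV_carrier[of m] n m_def by simp
    show "MW m \<in> carrier_mat (4*k+1) (2*k+2)" using MW_carrier[of m] n m_def by simp
    fix i j assume ij: "i < 2*k+2" "j < 2*k+2"
    {
      assume c: "(int j - int i) mod int (2*k+2) \<notin> {0, 1, int (2*k+1)}"
      have c': "(int j - int i) mod int m \<notin> {0, 1, int m - 1}" using c cond m_def by simp
      show "orth (col (MV m) i) (col (MV m) j)" unfolding orth_def
        using orth_vv[OF m4 _ _ c'] ij m_def by simp
      show "orth (col (MW m) i) (col (MW m) j)" unfolding orth_def
        using orth_ww[OF m4 _ _ c'] ij m_def by simp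
    }
    assume "i \<noteq> j"
    then show "orth (col (MV m) i) (col (MW m) j)" unfolding orth_def
      using orth_vw[OF m4] ij m_def by simp
  next
    fix J :: "nat set" assume J: "J \<subseteq> {..<4*k+4} \<and> card J = 4*k+1"
    show "det (submatrix (block_cols (MV m) (MW m)) UNIV J) \<noteq> 0"
      using det_nonzero[OF m4] J n by simp
  qed
qed

end
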